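(* Let $\sigma$ be an environment and $e$ an expression of iTML with $\sigma, e \Rightarrow v$. Let $\mathsf{fwd}_{\sigma,e} : \mathrm{Prefix}(\sigma,e) \to \mathrm{Prefix}(v)$ be the function sending $(\rho,e')$ to the unique $u$ with $\rho, e' \nearrow u$. Then $\mathsf{fwd}_{\sigma,e}$ preserves binary meets: for all $x, x' \in \mathrm{Prefix}(\sigma,e)$, $\mathsf{fwd}_{\sigma,e}(x \sqcap x') = \mathsf{fwd}_{\sigma,e}(x) \sqcap \mathsf{fwd}_{\sigma,e}(x')$.
   Context: Partial syntax ($\Box$ denotes a hole): expressions $e ::= x \mid () \mid \mathsf{inl}\,e \mid \mathsf{inr}\,e \mid (e_1,e_2) \mid \mathsf{fst}\,e \mid \mathsf{snd}\,e \mid \mathsf{fun}\,f(x).M \mid \Box$, where $M$ ranges over (partial) computations of the language (their structure is irrelevant here beyond the order below); values $v ::= () \mid \mathsf{inl}\,v \mid \mathsf{inr}\,v \mid (v_1,v_2) \mid \langle \rho, \mathsf{fun}\,f(x).M\rangle \mid \ell \mid \Box$; environments are finitely supported maps from variables to values, regarded as total with value $\Box$ outside their domain. $\sqsubseteq$ is the least order with $\Box \sqsubseteq t$ that is closed under all constructors componentwise (also for computations), pointwise on environments; on pairs $(\rho,e)$ it is componentwise. $\mathrm{Prefix}(t)=\{t'\mid t'\sqsubseteq t\}$; these are lattices, $\sqcap$ the meet. Evaluation $\rho,e\Rightarrow v$ (on hole-free terms): $\rho,x\Rightarrow\rho(x)$ for $x\in\mathrm{dom}(\rho)$; $\rho,()\Rightarrow()$;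 $\rho,\mathsf{fun}\,f(x).M\Rightarrow\langle\rho,\mathsf{fun}\,f(x).M\rangle$; $\mathsf{inl}$, $\mathsf{inr}$ and pairs evaluate componentwise; if $\rho,e\Rightarrow(v_1,v_2)$ then $\rho,\mathsf{fst}\,e\Rightarrow v_1$ and $\rho,\mathsf{snd}\,e\Rightarrow v_2$. Forward slicing $\rho,e\nearrow v$ (on partial terms): $\rho,\Box\nearrow\Box$; $\rho,x\nearrow\rho(x)$ for $x \in \mathrm{dom}(\rho)$; $\rho,()\nearrow()$; $\rho,\mathsf{fun}\,f(x).M\nearrow\langle\rho,\mathsf{fun}\,f(x).M\rangle$; if $\rho,e\nearrow v$ then $\rho,\mathsf{inl}\,e\nearrow\mathsf{inl}\,v$ and $\rho,\mathsf{inr}\,e\nearrow\mathsf{inr}\,v$; if $\rho,e_i\nearrow v_i$ then $\rho,(e_1,e_2)\nearrow(v_1,v_2)$; if $\rho,e\nearrow(v_1,v_2)$ then $\rho,\mathsf{fst}\,e\nearrow v_1$ and $\rho,\mathsf{snd}\,e\nearrow v_2$; if $\rho,e\nearrow\Box$ then $\rho,\mathsf{fst}\,e\nearrow\Box$ and $\rho,\mathsf{snd}\,e\nearrow\Box$. For $\sigma,e\Rightarrow v$, every element of $\mathrm{Prefix}(\sigma,e)$ has a unique $\nearrow$-image, lying in $\mathrm{Prefix}(v)$. *)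

theory Defs
  imports Main
begin

text \<open>Partial syntax of iTML (fragment). 'x = variables, 'm = (partial) computations,
  whose structure is abstracted; only their prefix order (class order) is used.\<close>

datatype ('x, 'm) exp =
    EVar 'x | EUnit | EInl "('x, 'm) exp" | EInr "('x, 'm) exp"
  | EPair "('x, 'm) exp" "('x, 'm) exp" | EFst "('x, 'm) exp" | ESnd "('x, 'm) exp"
  | EFun 'x 'x 'm | EHole

datatype ('x, 'm) val =
    VUnit | VInl "('x, 'm) val" | VInr "('x, 'm) val" | VPair "('x, 'm) val" "('x, 'm) val"
  | VClo "'x \<Rightarrow> ('x, 'm) val" 'x 'x 'm | VLoc nat | VHole

text \<open>Environments: total maps, value VHole outside the (finite) domain.\<close>
type_synonym ('x, 'm) env = "'x \<Rightarrow> ('x, 'm) val"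

definition edom :: "('x, 'm) env \<Rightarrow> 'x set" where
  "edom \<rho> = {y. \<rho> y \<noteq> VHole}"

inductive le_val :: "('x, 'm::order) val \<Rightarrow> ('x, 'm) val \<Rightarrow> bool" where
  "le_val VHole v"
| "le_val VUnit VUnit"
| "le_val a b \<Longrightarrow> le_val (VInl a) (VInl b)"
| "le_val a b \<Longrightarrow> le_val (VInr a) (VInr b)"
| "le_val a1 b1 \<Longrightarrow> le_val a2 b2 \<Longrightarrow> le_val (VPair a1 a2) (VPair b1 b2)"
| "(\<forall>y. le_val (\<rho> y) (\<rho>' y)) \<Longrightarrow> M \<le> M' \<Longrightarrow> le_val (VClo \<rho> f x M) (VClo \<rho>' f x M')"
| "le_val (VLoc l) (VLoc l)"

inductive le_exp :: "('x, 'm::order) exp \<Rightarrow> ('x, 'm) exp \<Rightarrow> bool" where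
  "le_exp EHole e"
| "le_exp (EVar x) (EVar x)"
| "le_exp EUnit EUnit"
| "le_exp a b \<Longrightarrow> le_exp (EInl a) (EInl b)"
| "le_exp a b \<Longrightarrow> le_exp (EInr a) (EInr b)"
| "le_exp a1 b1 \<Longrightarrow> le_exp a2 b2 \<Longrightarrow> le_exp (EPair a1 a2) (EPair b1 b2)"
| "le_exp a b \<Longrightarrow> le_exp (EFst a) (EFst b)"
| "le_exp a b \<Longrightarrow> le_exp (ESnd a) (ESnd b)"
| "M \<le> M' \<Longrightarrow> le_exp (EFun f x M) (EFun f x M')"

definition le_env :: "('x, 'm::order) env \<Rightarrow> ('x, 'm) env \<Rightarrow> bool" where
  "le_env \<rho> \<rho>' \<longleftrightarrow> (\<forall>y. le_val (\<rho> y) (\<rho>' y))"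

definition le_pair :: "('x, 'm::order) env \<times> ('x, 'm) exp \<Rightarrow> ('x, 'm) env \<times> ('x, 'm) exp \<Rightarrow> bool" where
  "le_pair p q \<longleftrightarrow> le_env (fst p) (fst q) \<and> le_exp (snd p) (snd q)"

definition prefix_val :: "('x, 'm::order) val \<Rightarrow> ('x, 'm) val set" where
  "prefix_val v = {u. le_val u v}"

definition prefix_pair :: "('x, 'm::order) env \<times> ('x, 'm) exp \<Rightarrow> (('x, 'm) env \<times> ('x, 'm) exp) set" where
  "prefix_pair p = {q. le_pair q p}"

definition is_meet_in :: "('a \<Rightarrow> 'a \<Rightarrow> bool) \<Rightarrow> 'a set \<Rightarrow> 'a \<Rightarrow> 'a \<Rightarrow> 'a \<Rightarrow> bool" where
  "is_meet_in le S a b c \<longleftrightarrow> c \<in> S \<and> le c a \<and> le c b \<and> (\<forall>d\<in>S. le d a \<longrightarrow> le d b \<longrightarrow> le d c)"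

text \<open>Hole-freeness (except inside computations, whose structure is abstracted).\<close>
inductive hf_val :: "('x, 'm) val \<Rightarrow> bool" where
  "hf_val VUnit"
| "hf_val a \<Longrightarrow> hf_val (VInl a)"
| "hf_val a \<Longrightarrow> hf_val (VInr a)"
| "hf_val a \<Longrightarrow> hf_val b \<Longrightarrow> hf_val (VPair a b)"
| "(\<forall>y. \<rho> y = VHole \<or> hf_val (\<rho> y)) \<Longrightarrow> finite (edom \<rho>) \<Longrightarrow> hf_val (VClo \<rho> f x M)"
| "hf_val (VLoc l)"

inductive eval :: "('x, 'm) env \<Rightarrow> ('x, 'm) exp \<Rightarrow> ('x, 'm) val \<Rightarrow> bool" where
  "x \<in> edom \<rho> \<Longrightarrow> eval \<rho> (EVar x) (\<rho> x)"
| "eval \<rho> EUnit VUnit"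
| "eval \<rho> (EFun f x M) (VClo \<rho> f x M)"
| "eval \<rho> e v \<Longrightarrow> eval \<rho> (EInl e) (VInl v)"
| "eval \<rho> e v \<Longrightarrow> eval \<rho> (EInr e) (VInr v)"
| "eval \<rho> e1 v1 \<Longrightarrow> eval \<rho> e2 v2 \<Longrightarrow> eval \<rho> (EPair e1 e2) (VPair v1 v2)"
| "eval \<rho> e (VPair v1 v2) \<Longrightarrow> eval \<rho> (EFst e) v1"
| "eval \<rho> e (VPair v1 v2) \<Longrightarrow> eval \<rho> (ESnd e) v2"

inductive fwd_slice :: "('x, 'm) env \<Rightarrow> ('x, 'm) exp \<Rightarrow> ('x, 'm) val \<Rightarrow> bool" where
  "fwd_slice \<rho> EHole VHole"
| "fwd_slice \<rho> (EVar x) (\<rho> x)"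
| "fwd_slice \<rho> EUnit VUnit"
| "fwd_slice \<rho> (EFun f x M) (VClo \<rho> f x M)"
| "fwd_slice \<rho> e v \<Longrightarrow> fwd_slice \<rho> (EInl e) (VInl v)"
| "fwd_slice \<rho> e v \<Longrightarrow> fwd_slice \<rho> (EInr e) (VInr v)"
| "fwd_slice \<rho> e1 v1 \<Longrightarrow> fwd_slice \<rho> e2 v2 \<Longrightarrow> fwd_slice \<rho> (EPair e1 e2) (VPair v1 v2)"
| "fwd_slice \<rho> e (VPair v1 v2) \<Longrightarrow> fwd_slice \<rho> (EFst e) v1"
| "fwd_slice \<rho> e (VPair v1 v2) \<Longrightarrow> fwd_slice \<rho> (ESnd e) v2"
| "fwd_slice \<rho> e VHole \<Longrightarrow> fwd_slice \<rho> (EFst e) VHole"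
| "fwd_slice \<rho> e VHole \<Longrightarrow> fwd_slice \<rho> (ESnd e) VHole"

definition fwd :: "('x, 'm) env \<times> ('x, 'm) exp \<Rightarrow> ('x, 'm) val" where
  "fwd p = (THE u. fwd_slice (fst p) (snd p) u)"

end

theory Submission
  imports Defs
begin

inductive_simps lv_hole1: "le_val VHole v"
inductive_simps lv_hole2: "le_val v VHole"
inductive_simps lv_unit2: "le_val v VUnit"
inductive_simps lv_inl1: "le_val (VInl a) v"
inductive_simps lv_inl2: "le_val v (VInl a)"
inductive_simps lv_inr1: "le_val (VInr a) v"
inductive_simps lv_inr2: "le_val v (VInr a)"
inductive_simps lv_pair1: "le_val (VPair a b) v"
inductive_simps lv_pair2: "le_val v (VPair a b)"
inductive_simps lv_clo1: "le_val (VClo r f x M) v"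
inductive_simps lv_clo2: "le_val v (VClo r f x M)"

inductive_simps le_hole2: "le_exp e EHole"
inductive_simps le_var1: "le_exp (EVar x) e"
inductive_simps le_var2: "le_exp e (EVar x)"
inductive_simps le_unit1: "le_exp EUnit e"
inductive_simps le_unit2: "le_exp e EUnit"
inductive_simps le_inl1: "le_exp (EInl a) e"
inductive_simps le_inl2: "le_exp e (EInl a)"
inductive_simps le_inr1: "le_exp (EInr a) e"
inductive_simps le_inr2: "le_exp e (EInr a)"
inductive_simps le_pair1: "le_exp (EPair a b) e"
inductive_simps le_pair2: "le_exp e (EPair a b)"
inductive_simps le_fst1: "le_exp (EFst a) e"
inductive_simps le_fst2: "le_exp e (EFst a)"
inductive_simps le_snd1: "le_exp (ESnd a) e"
inductive_simps le_snd2: "le_exp e (ESnd a)"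
inductive_simps le_fun1: "le_exp (EFun f x M) e"
inductive_simps le_fun2: "le_exp e (EFun f x M)"

inductive_simps fs_hole: "fwd_slice r EHole u"
inductive_simps fs_var: "fwd_slice r (EVar x) u"
inductive_simps fs_unit: "fwd_slice r EUnit u"
inductive_simps fs_fun: "fwd_slice r (EFun f x M) u"
inductive_simps fs_inl: "fwd_slice r (EInl e) u"
inductive_simps fs_inr: "fwd_slice r (EInr e) u"
inductive_simps fs_pair: "fwd_slice r (EPair a b) u"
inductive_simps fs_fst: "fwd_slice r (EFst e) u"
inductive_simps fs_snd: "fwd_slice r (ESnd e) u"

lemmas lv_simps = lv_hole1 lv_hole2 lv_unit2 lv_inl1 lv_inl2 lv_inr1 lv_inr2 lv_pair1 lv_pair2 lv_clo1 lv_clo2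
lemmas le_simps = le_hole2 le_var1 le_var2 le_unit1 le_unit2 le_inl1 le_inl2 le_inr1 le_inr2
  le_pair1 le_pair2 le_fst1 le_fst2 le_snd1 le_snd2 le_fun1 le_fun2
lemmas fs_simps = fs_hole fs_var fs_unit fs_fun fs_inl fs_inr fs_pair fs_fst fs_snd

lemma le_val_refl: "le_val (v::('x,'m::order) val) v"
  by (induction v) (auto intro: le_val.intros)

lemma le_val_trans: "le_val (a::('x,'m::order) val) b \<Longrightarrow> le_val b c \<Longrightarrow> le_val a c"
proof (induction a b arbitrary: c rule: le_val.induct)
  case (6 \<rho> \<rho>' M M' f x)
  then show ?case by (auto simp: lv_clo1 intro!: le_val.intros dest: order_trans)
qed (auto simp: lv_simps intro: le_val.intros)

lemma le_exp_refl: "le_exp (e::('x,'m::order) exp) e"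
  by (induction e) (auto intro: le_exp.intros)

lemma le_exp_trans: "le_exp (a::('x,'m::order) exp) b \<Longrightarrow> le_exp b c \<Longrightarrow> le_exp a c"
  by (induction a b arbitrary: c rule: le_exp.induct) (auto simp: le_simps intro: le_exp.intros)

lemma fs_det: "fwd_slice r e u \<Longrightarrow> fwd_slice r e u' \<Longrightarrow> u = u'"
proof (induction r e u arbitrary: u' rule: fwd_slice.induct)
  case (1 \<rho>) then show ?case by (simp add: fs_hole)
next
  case (2 \<rho> x) then show ?case by (simp add: fs_var)
next
  case (3 \<rho>) then show ?case by (simp add: fs_unit)
next
  case (4 \<rho> f x M) then show ?case by (simp add: fs_fun)
next
  case (5 \<rho> e v) from "5.prems" show ?case unfolding fs_inl by (auto dest: "5.IH")
next
  case (6 \<rho> e v) from "6.prems" show ?case unfolding fs_inr by (auto dest: "6.IH")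
next
  case (7 \<rho> e1 v1 e2 v2) from "7.prems" show ?case unfolding fs_pair by (auto dest: "7.IH")
next
  case (8 \<rho> e v1 v2)
  from "8.prems" show ?case unfolding fs_fst by (elim disjE exE conjE) (auto dest: "8.IH")
next
  case (9 \<rho> e v1 v2)
  from "9.prems" show ?case unfolding fs_snd by (elim disjE exE conjE) (auto dest: "9.IH")
next
  case (10 \<rho> e)
  from "10.prems" show ?case unfolding fs_fst by (elim disjE exE conjE) (auto dest: "10.IH")
next
  case (11 \<rho> e)
  from "11.prems" show ?case unfolding fs_snd by (elim disjE exE conjE) (auto dest: "11.IH")
qed

lemma eval_fs: "eval r e v \<Longrightarrow> fwd_slice r e v"
  by (induction rule: eval.induct) (auto intro: fwd_slice.intros)

lemma fs_mono: "fwd_slice r a u \<Longrightarrow> fwd_slice r' a' u' \<Longrightarrow> le_env r r' \<Longrightarrow> le_exp a a'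
   \<Longrightarrow> le_val u (u'::('x,'m::order) val)"
proof (induction r a u arbitrary: r' a' u' rule: fwd_slice.induct)
  case (1 \<rho>)
  then show ?case by (auto intro: le_val.intros)
next
  case (2 \<rho> x)
  then show ?case by (auto simp: le_var1 fs_var le_env_def)
next
  case (3 \<rho>)
  then show ?case by (auto simp: le_unit1 fs_unit intro: le_val.intros)
next
  case (4 \<rho> f x M)
  then show ?case by (auto simp: le_fun1 fs_fun le_env_def intro: le_val.intros)
next
  case (5 \<rho> e v)
  then show ?case by (auto simp: le_inl1 fs_inl intro!: le_val.intros intro: "5.IH")
next
  case (6 \<rho> e v)
  then show ?case by (auto simp: le_inr1 fs_inr intro!: le_val.intros intro: "6.IH")
next
  case (7 \<rho> e1 v1 e2 v2)
  then show ?case by (auto simp: le_pair1 fs_pair intro!: le_val.intros intro: "7.IH")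
next
  case (8 \<rho> e v1 v2)
  from "8.prems"(3) obtain e' where a': "a' = EFst e'" "le_exp e e'" by (auto simp: le_fst1)
  from "8.prems"(1) a'(1) have "(\<exists>w. fwd_slice r' e' (VPair u' w)) \<or> (fwd_slice r' e' VHole \<and> u' = VHole)"
    by (auto simp add: fs_fst)
  then show ?case
  proof
    assume "\<exists>w. fwd_slice r' e' (VPair u' w)"
    then obtain w where "fwd_slice r' e' (VPair u' w)" by blast
    from "8.IH"[OF this "8.prems"(2) a'(2)] show ?case by (simp add: lv_pair1)
  next
    assume "fwd_slice r' e' VHole \<and> u' = VHole"
    with "8.IH"[of r' e' VHole] "8.prems"(2) a'(2) show ?case by (simp add: lv_hole2)
  qed
next
  case (9 \<rho> e v1 v2)
  from "9.prems"(3) obtain e' where a': "a' = ESnd e'" "le_exp e e'" by (auto simp: le_snd1)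
  from "9.prems"(1) a'(1) have "(\<exists>w. fwd_slice r' e' (VPair w u')) \<or> (fwd_slice r' e' VHole \<and> u' = VHole)"
    by (auto simp add: fs_snd)
  then show ?case
  proof
    assume "\<exists>w. fwd_slice r' e' (VPair w u')"
    then obtain w where "fwd_slice r' e' (VPair w u')" by blast
    from "9.IH"[OF this "9.prems"(2) a'(2)] show ?case by (simp add: lv_pair1)
  next
    assume "fwd_slice r' e' VHole \<and> u' = VHole"
    with "9.IH"[of r' e' VHole] "9.prems"(2) a'(2) show ?case by (simp add: lv_hole2)
  qed
next
  case (10 \<rho> e)
  then show ?case by (auto intro: le_val.intros)
next
  case (11 \<rho> e)
  then show ?case by (auto intro: le_val.intros)
qed


lemma fs_exists: "eval \<sigma> e v \<Longrightarrow> le_env \<rho> \<sigma> \<Longrightarrow> le_exp a e \<Longrightarrow> \<exists>u. fwd_slice \<rho> a (u::('x,'m::order) val)"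
proof (induction arbitrary: a rule: eval.induct)
  case (1 x \<rho>') then show ?case by (auto simp: le_var2 intro: fwd_slice.intros)
next
  case (2 \<rho>') then show ?case by (auto simp: le_unit2 intro: fwd_slice.intros)
next
  case (3 \<rho>' f x M) then show ?case by (auto simp: le_fun2 intro: fwd_slice.intros)
next
  case (4 \<rho>' e v) then show ?case by (auto simp: le_inl2 intro: fwd_slice.intros)
next
  case (5 \<rho>' e v) then show ?case by (auto simp: le_inr2 intro: fwd_slice.intros)
next
  case (6 \<rho>' e1 v1 e2 v2) then show ?case by (auto simp: le_pair2 intro: fwd_slice.intros) (meson fwd_slice.intros(7))
next
  case (7 \<rho>' e v1 v2)
  show ?case
  proof (cases "a = EHole")
    case True then show ?thesis by (auto intro: fwd_slice.intros)
  next
    case False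
    with "7.prems"(2) obtain a0 where a: "a = EFst a0" "le_exp a0 e" by (auto simp: le_fst2)
    from "7.IH"[OF "7.prems"(1) a(2)] obtain u where u: "fwd_slice \<rho> a0 u" by blast
    have "le_val u (VPair v1 v2)" using fs_mono[OF u eval_fs[OF "7.hyps"] "7.prems"(1) a(2)] .
    then have "u = VHole \<or> (\<exists>x y. u = VPair x y)" by (auto simp: lv_pair2)
    then show ?thesis using u a(1) by (auto intro: fwd_slice.intros)
  qed
next
  case (8 \<rho>' e v1 v2)
  show ?case
  proof (cases "a = EHole")
    case True then show ?thesis by (auto intro: fwd_slice.intros)
  next
    case False
    with "8.prems"(2) obtain a0 where a: "a = ESnd a0" "le_exp a0 e" by (auto simp: le_snd2)
    from "8.IH"[OF "8.prems"(1) a(2)] obtain u where u: "fwd_slice \<rho> a0 u" by blast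
    have "le_val u (VPair v1 v2)" using fs_mono[OF u eval_fs[OF "8.hyps"] "8.prems"(1) a(2)] .
    then have "u = VHole \<or> (\<exists>x y. u = VPair x y)" by (auto simp: lv_pair2)
    then show ?thesis using u a(1) by (auto intro: fwd_slice.intros)
  qed
qed


definition envmeet :: "('x, 'm::order) env \<Rightarrow> ('x, 'm) env \<Rightarrow> ('x, 'm) env \<Rightarrow> ('x, 'm) env \<Rightarrow> bool" where
  "envmeet \<sigma> \<rho>1 \<rho>2 \<rho>q \<longleftrightarrow> le_env \<rho>1 \<sigma> \<and> le_env \<rho>2 \<sigma> \<and> le_env \<rho>q \<sigma> \<and> le_env \<rho>q \<rho>1 \<and> le_env \<rho>q \<rho>2 \<and>
     (\<forall>\<rho>d. le_env \<rho>d \<sigma> \<longrightarrow> le_env \<rho>d \<rho>1 \<longrightarrow> le_env \<rho>d \<rho>2 \<longrightarrow> le_env \<rho>d \<rho>q)"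

definition expmeet :: "('x, 'm::order) exp \<Rightarrow> ('x, 'm) exp \<Rightarrow> ('x, 'm) exp \<Rightarrow> ('x, 'm) exp \<Rightarrow> bool" where
  "expmeet e a b c \<longleftrightarrow> le_exp a e \<and> le_exp b e \<and> le_exp c e \<and> le_exp c a \<and> le_exp c b \<and>
     (\<forall>d. le_exp d e \<longrightarrow> le_exp d a \<longrightarrow> le_exp d b \<longrightarrow> le_exp d c)"

lemma em_inl: "expmeet (EInl e) (EInl a) (EInl b) c \<Longrightarrow> \<exists>c0. c = EInl c0 \<and> expmeet e a b c0"
proof -
  assume m: "expmeet (EInl e) (EInl a) (EInl b) c"
  then have "le_exp (EInl EHole) c" by (auto simp: expmeet_def intro: le_exp.intros)
  then obtain c0 where c: "c = EInl c0" by (auto simp: le_inl1)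
  have "expmeet e a b c0" using m unfolding expmeet_def c
    by (auto simp: le_inl1 le_inl2)
  with c show ?thesis by blast
qed

lemma em_inr: "expmeet (EInr e) (EInr a) (EInr b) c \<Longrightarrow> \<exists>c0. c = EInr c0 \<and> expmeet e a b c0"
proof -
  assume m: "expmeet (EInr e) (EInr a) (EInr b) c"
  then have "le_exp (EInr EHole) c" by (auto simp: expmeet_def intro: le_exp.intros)
  then obtain c0 where c: "c = EInr c0" by (auto simp: le_inr1)
  have "expmeet e a b c0" using m unfolding expmeet_def c
    by (auto simp: le_inr1 le_inr2)
  with c show ?thesis by blast
qed

lemma em_fst: "expmeet (EFst e) (EFst a) (EFst b) c \<Longrightarrow> \<exists>c0. c = EFst c0 \<and> expmeet e a b c0"
proof -
  assume m: "expmeet (EFst e) (EFst a) (EFst b) c"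
  then have "le_exp (EFst EHole) c" by (auto simp: expmeet_def intro: le_exp.intros)
  then obtain c0 where c: "c = EFst c0" by (auto simp: le_fst1)
  have "expmeet e a b c0" using m unfolding expmeet_def c
    by (auto simp: le_fst1 le_fst2)
  with c show ?thesis by blast
qed

lemma em_snd: "expmeet (ESnd e) (ESnd a) (ESnd b) c \<Longrightarrow> \<exists>c0. c = ESnd c0 \<and> expmeet e a b c0"
proof -
  assume m: "expmeet (ESnd e) (ESnd a) (ESnd b) c"
  then have "le_exp (ESnd EHole) c" by (auto simp: expmeet_def intro: le_exp.intros)
  then obtain c0 where c: "c = ESnd c0" by (auto simp: le_snd1)
  have "expmeet e a b c0" using m unfolding expmeet_def c
    by (auto simp: le_snd1 le_snd2)
  with c show ?thesis by blast
qed

lemma em_pair: "expmeet (EPair e1 e2) (EPair a1 a2) (EPair b1 b2) c \<Longrightarrow>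
   \<exists>c1 c2. c = EPair c1 c2 \<and> expmeet e1 a1 b1 c1 \<and> expmeet e2 a2 b2 c2"
proof -
  assume m: "expmeet (EPair e1 e2) (EPair a1 a2) (EPair b1 b2) c"
  then have "le_exp (EPair EHole EHole) c" by (auto simp: expmeet_def intro: le_exp.intros)
  then obtain c1 c2 where c: "c = EPair c1 c2" by (auto simp: le_pair1)
  from m have A: "\<And>d1 d2. le_exp d1 e1 \<Longrightarrow> le_exp d2 e2 \<Longrightarrow> le_exp d1 a1 \<Longrightarrow> le_exp d2 a2 \<Longrightarrow>
     le_exp d1 b1 \<Longrightarrow> le_exp d2 b2 \<Longrightarrow> le_exp d1 c1 \<and> le_exp d2 c2"
    unfolding expmeet_def c by (auto intro: le_exp.intros simp: le_pair1)
  have h: "le_exp EHole x" for x :: "('a, 'b) exp" by (rule le_exp.intros)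
  have "expmeet e1 a1 b1 c1" "expmeet e2 a2 b2 c2" using m A[OF _ h _ h _ h] A[OF h _ h _ h]
    unfolding expmeet_def c by (auto simp: le_pair1 le_pair2)
  with c show ?thesis by blast
qed


lemma fs_hole_eq: "fwd_slice r EHole u \<Longrightarrow> u = VHole"
  by (simp add: fs_hole)

lemma glb:
  fixes \<sigma> :: "('x, 'm::order) env"
  assumes "eval \<sigma> e v"
  shows "envmeet \<sigma> \<rho>1 \<rho>2 \<rho>q \<Longrightarrow> expmeet e a b c \<Longrightarrow>
    fwd_slice \<rho>1 a u1 \<Longrightarrow> fwd_slice \<rho>2 b u2 \<Longrightarrow> fwd_slice \<rho>q c u3 \<Longrightarrow>
    le_val d v \<Longrightarrow> le_val d u1 \<Longrightarrow> le_val d u2 \<Longrightarrow> le_val d u3"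
  using assms
proof (induction arbitrary: a b c u1 u2 u3 d rule: eval.induct)
  case (1 x \<sigma>)
  show ?case
  proof (cases "d = VHole")
    case True then show ?thesis by (simp add: lv_hole1)
  next
    case False
    with "1.prems"(3,4,7,8) have "a \<noteq> EHole" "b \<noteq> EHole" by (auto simp: fs_hole lv_hole2)
    with "1.prems"(2) have ab: "a = EVar x" "b = EVar x" by (auto simp: le_var2 expmeet_def)
    have "le_exp (EVar x) c" using "1.prems"(2) ab by (auto intro: le_exp.intros simp: expmeet_def)
    then have c: "c = EVar x" by (simp add: le_var1)
    have u: "u1 = \<rho>1 x" "u2 = \<rho>2 x" "u3 = \<rho>q x" using "1.prems"(3,4,5) ab c by (auto simp: fs_var)
    from "1.prems"(1) have E: "le_env \<rho>q \<sigma>" "le_env \<rho>q \<rho>1" "le_env \<rho>q \<rho>2"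
      "\<And>\<rho>d. le_env \<rho>d \<sigma> \<Longrightarrow> le_env \<rho>d \<rho>1 \<Longrightarrow> le_env \<rho>d \<rho>2 \<Longrightarrow> le_env \<rho>d \<rho>q"
      unfolding envmeet_def by blast+
    have "le_env (\<rho>q(x := d)) \<sigma>" using E(1) "1.prems"(6) unfolding le_env_def by simp
    moreover have "le_env (\<rho>q(x := d)) \<rho>1" using E(2) "1.prems"(7) u(1) unfolding le_env_def by simp
    moreover have "le_env (\<rho>q(x := d)) \<rho>2" using E(3) "1.prems"(8) u(2) unfolding le_env_def by simp
    ultimately have "le_env (\<rho>q(x := d)) \<rho>q" by (rule E(4))
    then have "le_val ((\<rho>q(x := d)) x) (\<rho>q x)" unfolding le_env_def by blast
    then show ?thesis using u by simp
  qed
next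
  case (2 \<sigma>)
  show ?case
  proof (cases "d = VHole")
    case True then show ?thesis by (simp add: lv_hole1)
  next
    case False
    with "2.prems"(3,4,7,8) have "a \<noteq> EHole" "b \<noteq> EHole" by (auto simp: fs_hole lv_hole2)
    with "2.prems"(2) have ab: "a = EUnit" "b = EUnit" by (auto simp: le_unit2 expmeet_def)
    have "le_exp EUnit c" using "2.prems"(2) ab by (auto intro: le_exp.intros simp: expmeet_def)
    then have c: "c = EUnit" by (simp add: le_unit1)
    then show ?thesis using "2.prems"(5,6) by (auto simp: fs_unit)
  qed
next
  case (3 \<sigma> f x M)
  show ?case
  proof (cases "d = VHole")
    case True then show ?thesis by (simp add: lv_hole1)
  next
    case False
    with "3.prems"(3,4,7,8) have "a \<noteq> EHole" "b \<noteq> EHole" by (auto simp: fs_hole lv_hole2)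
    with "3.prems"(2) obtain M1 M2 where ab: "a = EFun f x M1" "b = EFun f x M2" "M1 \<le> M" "M2 \<le> M"
      by (auto simp: le_fun2 expmeet_def)
    have u: "u1 = VClo \<rho>1 f x M1" "u2 = VClo \<rho>2 f x M2" using "3.prems"(3,4) ab by (auto simp: fs_fun)
    from "3.prems"(7) False u obtain \<rho>d Md where d: "d = VClo \<rho>d f x Md" "\<forall>y. le_val (\<rho>d y) (\<rho>1 y)" "Md \<le> M1"
      by (auto simp: lv_clo2)
    from "3.prems"(8) d u have d2: "\<forall>y. le_val (\<rho>d y) (\<rho>2 y)" "Md \<le> M2" by (auto simp: lv_clo2)
    from "3.prems"(6) d have d3: "\<forall>y. le_val (\<rho>d y) (\<sigma> y)" "Md \<le> M" by (auto simp: lv_clo2)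
    have "le_exp (EFun f x Md) c" using "3.prems"(2) ab d d2 d3 by (auto intro: le_exp.intros simp: expmeet_def)
    then obtain Mc where c: "c = EFun f x Mc" "Md \<le> Mc" by (auto simp: le_fun1)
    have u3: "u3 = VClo \<rho>q f x Mc" using "3.prems"(5) c by (simp add: fs_fun)
    have "le_env \<rho>d \<rho>q" using "3.prems"(1) d d2 d3 by (auto simp: envmeet_def le_env_def)
    then show ?thesis using u3 d c by (auto simp: le_env_def intro: le_val.intros)
  qed
next
  case (4 \<sigma> e v)
  show ?case
  proof (cases "d = VHole")
    case True then show ?thesis by (simp add: lv_hole1)
  next
    case False
    with "4.prems"(3,4,7,8) have "a \<noteq> EHole" "b \<noteq> EHole" by (auto simp: fs_hole lv_hole2)
    with "4.prems"(2) obtain a0 b0 where ab: "a = EInl a0" "b = EInl b0"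
      by (auto simp: le_inl2 expmeet_def)
    from em_inl "4.prems"(2) ab obtain c0 where c: "c = EInl c0" "expmeet e a0 b0 c0" by blast
    from "4.prems"(3,4,5) ab c obtain w1 w2 w3 where w: "u1 = VInl w1" "u2 = VInl w2" "u3 = VInl w3"
      "fwd_slice \<rho>1 a0 w1" "fwd_slice \<rho>2 b0 w2" "fwd_slice \<rho>q c0 w3" by (auto simp: fs_inl)
    from "4.prems"(6) False obtain d0 where d: "d = VInl d0" "le_val d0 v" by (auto simp: lv_inl2)
    have "le_val d0 w3" using "4.IH"[OF "4.prems"(1) c(2) w(4,5,6) d(2)] "4.prems"(7,8) d w
      by (auto simp: lv_inl1)
    then show ?thesis using d w by (auto intro: le_val.intros)
  qed
next
  case (5 \<sigma> e v)
  show ?case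
  proof (cases "d = VHole")
    case True then show ?thesis by (simp add: lv_hole1)
  next
    case False
    with "5.prems"(3,4,7,8) have "a \<noteq> EHole" "b \<noteq> EHole" by (auto simp: fs_hole lv_hole2)
    with "5.prems"(2) obtain a0 b0 where ab: "a = EInr a0" "b = EInr b0"
      by (auto simp: le_inr2 expmeet_def)
    from em_inr "5.prems"(2) ab obtain c0 where c: "c = EInr c0" "expmeet e a0 b0 c0" by blast
    from "5.prems"(3,4,5) ab c obtain w1 w2 w3 where w: "u1 = VInr w1" "u2 = VInr w2" "u3 = VInr w3"
      "fwd_slice \<rho>1 a0 w1" "fwd_slice \<rho>2 b0 w2" "fwd_slice \<rho>q c0 w3" by (auto simp: fs_inr)
    from "5.prems"(6) False obtain d0 where d: "d = VInr d0" "le_val d0 v" by (auto simp: lv_inr2)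
    have "le_val d0 w3" using "5.IH"[OF "5.prems"(1) c(2) w(4,5,6) d(2)] "5.prems"(7,8) d w
      by (auto simp: lv_inr1)
    then show ?thesis using d w by (auto intro: le_val.intros)
  qed
next
  case (6 \<sigma> e1 v1 e2 v2)
  show ?case
  proof (cases "d = VHole")
    case True then show ?thesis by (simp add: lv_hole1)
  next
    case False
    with "6.prems"(3,4,7,8) have "a \<noteq> EHole" "b \<noteq> EHole" by (auto simp: fs_hole lv_hole2)
    with "6.prems"(2) obtain a1 a2 b1 b2 where ab: "a = EPair a1 a2" "b = EPair b1 b2"
      by (auto simp: le_pair2 expmeet_def)
    from em_pair "6.prems"(2) ab obtain c1 c2 where c: "c = EPair c1 c2" "expmeet e1 a1 b1 c1" "expmeet e2 a2 b2 c2" by blast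
    from "6.prems"(3,4,5) ab c obtain w1 w2 w3 x1 x2 x3 where w: "u1 = VPair w1 x1" "u2 = VPair w2 x2" "u3 = VPair w3 x3"
      "fwd_slice \<rho>1 a1 w1" "fwd_slice \<rho>2 b1 w2" "fwd_slice \<rho>q c1 w3"
      "fwd_slice \<rho>1 a2 x1" "fwd_slice \<rho>2 b2 x2" "fwd_slice \<rho>q c2 x3" by (auto simp: fs_pair)
    from "6.prems"(6) False obtain d1 d2 where d: "d = VPair d1 d2" "le_val d1 v1" "le_val d2 v2" by (auto simp: lv_pair2)
    have "le_val d1 w3" using "6.IH"(1)[OF "6.prems"(1) c(2) w(4,5,6) d(2)] "6.prems"(7,8) d w
      by (auto simp: lv_pair1)
    moreover have "le_val d2 x3" using "6.IH"(2)[OF "6.prems"(1) c(3) w(7,8,9) d(3)] "6.prems"(7,8) d w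
      by (auto simp: lv_pair1)
    ultimately show ?thesis using d w by (auto intro: le_val.intros)
  qed
next
  case (7 \<sigma> e v1 v2)
  show ?case
  proof (cases "d = VHole")
    case True then show ?thesis by (simp add: lv_hole1)
  next
    case False
    with "7.prems"(3,4,7,8) have "a \<noteq> EHole" "b \<noteq> EHole" by (auto simp: fs_hole lv_hole2)
    with "7.prems"(2) obtain a0 b0 where ab: "a = EFst a0" "b = EFst b0"
      by (auto simp: le_fst2 expmeet_def)
    from em_fst "7.prems"(2) ab obtain c0 where c: "c = EFst c0" "expmeet e a0 b0 c0" by blast
    from "7.prems"(3) ab False "7.prems"(7) obtain y1 where w1: "fwd_slice \<rho>1 a0 (VPair u1 y1)"
      by (auto simp: fs_fst lv_hole2)
    from "7.prems"(4) ab False "7.prems"(8) obtain y2 where w2: "fwd_slice \<rho>2 b0 (VPair u2 y2)"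
      by (auto simp: fs_fst lv_hole2)
    have dp: "le_val (VPair d VHole) (VPair v1 v2)" using "7.prems"(6) by (auto intro: le_val.intros)
    from "7.prems"(5) c(1) have "(\<exists>y3. fwd_slice \<rho>q c0 (VPair u3 y3)) \<or> (fwd_slice \<rho>q c0 VHole \<and> u3 = VHole)"
      by (auto simp: fs_fst)
    then show ?thesis
    proof
      assume "\<exists>y3. fwd_slice \<rho>q c0 (VPair u3 y3)"
      then obtain y3 where w3: "fwd_slice \<rho>q c0 (VPair u3 y3)" by blast
      have "le_val (VPair d VHole) (VPair u3 y3)"
        using "7.IH"[OF "7.prems"(1) c(2) w1 w2 w3 dp] "7.prems"(7,8) by (auto intro: le_val.intros)
      then show ?thesis by (simp add: lv_pair1)
    next
      assume h: "fwd_slice \<rho>q c0 VHole \<and> u3 = VHole"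
      have "le_val (VPair d VHole) VHole"
        using "7.IH"[OF "7.prems"(1) c(2) w1 w2 _ dp] h "7.prems"(7,8) by (auto intro: le_val.intros)
      then show ?thesis by (simp add: lv_hole2)
    qed
  qed
next
  case (8 \<sigma> e v1 v2)
  show ?case
  proof (cases "d = VHole")
    case True then show ?thesis by (simp add: lv_hole1)
  next
    case False
    with "8.prems"(3,4,7,8) have "a \<noteq> EHole" "b \<noteq> EHole" by (auto simp: fs_hole lv_hole2)
    with "8.prems"(2) obtain a0 b0 where ab: "a = ESnd a0" "b = ESnd b0"
      by (auto simp: le_snd2 expmeet_def)
    from em_snd "8.prems"(2) ab obtain c0 where c: "c = ESnd c0" "expmeet e a0 b0 c0" by blast
    from "8.prems"(3) ab False "8.prems"(7) obtain y1 where w1: "fwd_slice \<rho>1 a0 (VPair y1 u1)"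
      by (auto simp: fs_snd lv_hole2)
    from "8.prems"(4) ab False "8.prems"(8) obtain y2 where w2: "fwd_slice \<rho>2 b0 (VPair y2 u2)"
      by (auto simp: fs_snd lv_hole2)
    have dp: "le_val (VPair VHole d) (VPair v1 v2)" using "8.prems"(6) by (auto intro: le_val.intros)
    from "8.prems"(5) c(1) have "(\<exists>y3. fwd_slice \<rho>q c0 (VPair y3 u3)) \<or> (fwd_slice \<rho>q c0 VHole \<and> u3 = VHole)"
      by (auto simp: fs_snd)
    then show ?thesis
    proof
      assume "\<exists>y3. fwd_slice \<rho>q c0 (VPair y3 u3)"
      then obtain y3 where w3: "fwd_slice \<rho>q c0 (VPair y3 u3)" by blast
      have "le_val (VPair VHole d) (VPair y3 u3)"
        using "8.IH"[OF "8.prems"(1) c(2) w1 w2 w3 dp] "8.prems"(7,8) by (auto intro: le_val.intros)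
      then show ?thesis by (simp add: lv_pair1)
    next
      assume h: "fwd_slice \<rho>q c0 VHole \<and> u3 = VHole"
      have "le_val (VPair VHole d) VHole"
        using "8.IH"[OF "8.prems"(1) c(2) w1 w2 _ dp] h "8.prems"(7,8) by (auto intro: le_val.intros)
      then show ?thesis by (simp add: lv_hole2)
    qed
  qed
qed


lemma fwd_eq: "fwd_slice (fst p) (snd p) u \<Longrightarrow> fwd p = u"
  unfolding fwd_def by (rule the_equality) (auto dest: fs_det)

theorem lemma3p4:
  fixes \<sigma> :: "('x, 'm::order) env" and e :: "('x, 'm) exp" and v :: "('x, 'm) val"
  assumes "finite (edom \<sigma>)"
    and "\<forall>y \<in> edom \<sigma>. hf_val (\<sigma> y)"
    and "eval \<sigma> e v"
    and "p \<in> prefix_pair (\<sigma>, e)" and "p' \<in> prefix_pair (\<sigma>, e)"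
    and "is_meet_in le_pair (prefix_pair (\<sigma>, e)) p p' q"
  shows "is_meet_in le_val (prefix_val v) (fwd p) (fwd p') (fwd q)"
proof -
  obtain \<rho>1 a where p: "p = (\<rho>1, a)" by (cases p)
  obtain \<rho>2 b where p': "p' = (\<rho>2, b)" by (cases p')
  obtain \<rho>q c where q: "q = (\<rho>q, c)" by (cases q)
  have P: "le_env \<rho>1 \<sigma>" "le_exp a e" "le_env \<rho>2 \<sigma>" "le_exp b e"
    using assms(4,5) p p' by (auto simp: prefix_pair_def le_pair_def)
  have Q: "le_env \<rho>q \<sigma>" "le_exp c e" "le_env \<rho>q \<rho>1" "le_exp c a" "le_env \<rho>q \<rho>2" "le_exp c b"
    and G: "\<And>d. le_pair d (\<sigma>, e) \<Longrightarrow> le_pair d (\<rho>1, a) \<Longrightarrow> le_pair d (\<rho>2, b) \<Longrightarrow> le_pair d (\<rho>q, c)"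
    using assms(6) p p' q by (auto simp: is_meet_in_def prefix_pair_def le_pair_def)
  have bot: "le_env (\<lambda>_. VHole) r" for r :: "('x, 'm) env"
    by (simp add: le_env_def lv_hole1)
  have eh: "le_exp EHole x" for x :: "('x, 'm) exp" by (rule le_exp.intros)
  have EM: "envmeet \<sigma> \<rho>1 \<rho>2 \<rho>q"
    unfolding envmeet_def using P Q G[of "(_, EHole)"] eh by (auto simp: le_pair_def)
  have XM: "expmeet e a b c"
    unfolding expmeet_def using P Q G[of "(\<lambda>_. VHole, _)"] bot by (auto simp: le_pair_def)
  obtain u1 where u1: "fwd_slice \<rho>1 a u1" using fs_exists[OF assms(3) P(1,2)] by blast
  obtain u2 where u2: "fwd_slice \<rho>2 b u2" using fs_exists[OF assms(3) P(3,4)] by blast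
  obtain u3 where u3: "fwd_slice \<rho>q c u3" using fs_exists[OF assms(3) Q(1,2)] by blast
  have f: "fwd p = u1" "fwd p' = u2" "fwd q = u3"
    using fwd_eq u1 u2 u3 p p' q by auto
  have "le_val u3 v" using fs_mono[OF u3 eval_fs[OF assms(3)] Q(1,2)] .
  moreover have "le_val u3 u1" using fs_mono[OF u3 u1 Q(3,4)] .
  moreover have "le_val u3 u2" using fs_mono[OF u3 u2 Q(5,6)] .
  moreover have "\<forall>d\<in>prefix_val v. le_val d u1 \<longrightarrow> le_val d u2 \<longrightarrow> le_val d u3"
    using glb[OF assms(3) EM XM u1 u2 u3] by (auto simp: prefix_val_def)
  ultimately show ?thesis unfolding f is_meet_in_def prefix_val_def by auto
qed

end
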